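(* Let $G=(V,E)$ be a finite simple undirected graph and let $k\ge 0$ be an integer. For each pair of adjacent nodes $r,r'$ of $G$, there exists a maximal $k$-robust partitioning of $G$ in which $r$ and $r'$ lie in the same part.
   Context: A finite simple undirected graph $H$ is $k$-robust if, after removing arbitrary $k$ nodes and their incident edges, the remaining graph is still connected; a clique or a single node is $k$-robust for every $k$. A set $S\subseteq V$ is $k$-robust if the induced subgraph $G[S]$ is $k$-robust. A maximal $k$-robust partitioning of $G$ is a partition of $V$ into nonempty parts such that (1) each node belongs to exactly one part, (2) each part is $k$-robust, and (3) the union of any two or more parts is not $k$-robust. *)

theory Defs
  imports Main
begin

definition simple_graph :: "'a set \<Rightarrow> ('a \<Rightarrow> 'a \<Rightarrow> bool) \<Rightarrow> bool" where
  "simple_graph V E \<longleftrightarrow> finite V \<and> (\<forall>u v. E u v \<longrightarrow> u \<in> V \<and> v \<in> V)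
     \<and> (\<forall>u v. E u v \<longrightarrow> E v u) \<and> (\<forall>v. \<not> E v v)"

text \<open>The induced subgraph G[S] is connected (the empty set counts as connected).\<close>
definition induced_connected :: "('a \<Rightarrow> 'a \<Rightarrow> bool) \<Rightarrow> 'a set \<Rightarrow> bool" where
  "induced_connected E S \<longleftrightarrow>
     (\<forall>u\<in>S. \<forall>v\<in>S. (\<lambda>x y. x \<in> S \<and> y \<in> S \<and> E x y)\<^sup>*\<^sup>* u v)"

definition is_clique :: "('a \<Rightarrow> 'a \<Rightarrow> bool) \<Rightarrow> 'a set \<Rightarrow> bool" where
  "is_clique E S \<longleftrightarrow> (\<forall>u\<in>S. \<forall>v\<in>S. u \<noteq> v \<longrightarrow> E u v)"

definition k_robust :: "('a \<Rightarrow> 'a \<Rightarrow> bool) \<Rightarrow> nat \<Rightarrow> 'a set \<Rightarrow> bool" where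
  "k_robust E k S \<longleftrightarrow> is_clique E S \<or>
     (\<forall>X. X \<subseteq> S \<and> card X \<le> k \<longrightarrow> induced_connected E (S - X))"

definition maximal_k_robust_partitioning ::
  "'a set \<Rightarrow> ('a \<Rightarrow> 'a \<Rightarrow> bool) \<Rightarrow> nat \<Rightarrow> 'a set set \<Rightarrow> bool" where
  "maximal_k_robust_partitioning V E k P \<longleftrightarrow>
     (\<forall>B\<in>P. B \<noteq> {} \<and> B \<subseteq> V) \<and> \<Union>P = V \<and>
     (\<forall>B\<in>P. \<forall>C\<in>P. B \<noteq> C \<longrightarrow> B \<inter> C = {}) \<and>
     (\<forall>B\<in>P. k_robust E k B) \<and>
     (\<forall>Q. Q \<subseteq> P \<and> card Q \<ge> 2 \<longrightarrow> \<not> k_robust E k (\<Union>Q))"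

end

theory Submission
  imports Defs
begin

definition goodP :: "'a set \<Rightarrow> ('a \<Rightarrow> 'a \<Rightarrow> bool) \<Rightarrow> nat \<Rightarrow> 'a \<Rightarrow> 'a \<Rightarrow> 'a set set \<Rightarrow> bool" where
  "goodP V E k r r' P \<longleftrightarrow> (\<forall>B\<in>P. B \<noteq> {} \<and> B \<subseteq> V) \<and> \<Union>P = V \<and>
     (\<forall>B\<in>P. \<forall>C\<in>P. B \<noteq> C \<longrightarrow> B \<inter> C = {}) \<and>
     (\<forall>B\<in>P. k_robust E k B) \<and> (\<exists>B\<in>P. r \<in> B \<and> r' \<in> B)"

lemma union_disj:
  assumes "\<forall>X\<in>Q. X \<inter> C = {}" shows "\<Union>Q \<inter> C = {}"
  using assms by blast

theorem lemma2:
  fixes V :: "'a set" and E :: "'a \<Rightarrow> 'a \<Rightarrow> bool" and k :: nat and r r' :: 'a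
  assumes "simple_graph V E"
    and "E r r'"
  shows "\<exists>P. maximal_k_robust_partitioning V E k P \<and> (\<exists>B\<in>P. r \<in> B \<and> r' \<in> B)"
proof -
  have fin: "finite V" and inV: "r \<in> V" "r' \<in> V" and sym: "E r' r" and ne: "r \<noteq> r'"
    using assms unfolding simple_graph_def by blast+
  define P0 where "P0 = insert {r, r'} ((\<lambda>v. {v}) ` (V - {r, r'}))"
  have cl: "k_robust E k B" if "B \<in> P0" for B
    using that assms(2) sym unfolding P0_def k_robust_def is_clique_def by auto
  have "goodP V E k r r' P0"
    unfolding goodP_def
  proof (intro conjI)
    show "\<forall>B\<in>P0. B \<noteq> {} \<and> B \<subseteq> V" using inV unfolding P0_def by auto
    show "\<Union>P0 = V" using inV unfolding P0_def by auto
    show "\<forall>B\<in>P0. \<forall>C\<in>P0. B \<noteq> C \<longrightarrow> B \<inter> C = {}" unfolding P0_def by auto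
    show "\<forall>B\<in>P0. k_robust E k B" using cl by blast
    show "\<exists>B\<in>P0. r \<in> B \<and> r' \<in> B" unfolding P0_def by blast
  qed
  then obtain P where gP: "goodP V E k r r' P"
    and minP: "\<forall>P'. goodP V E k r r' P' \<longrightarrow> card P \<le> card P'"
    using ex_has_least_nat[of "goodP V E k r r'" P0 card] by blast
  have "P \<subseteq> Pow V" using gP unfolding goodP_def by blast
  then have finP: "finite P" using fin finite_subset by blast
  have g1: "(\<forall>B\<in>P. B \<noteq> {} \<and> B \<subseteq> V)" and g2: "\<Union>P = V"
    and g3: "(\<forall>B\<in>P. \<forall>C\<in>P. B \<noteq> C \<longrightarrow> B \<inter> C = {})"
    and g4: "(\<forall>B\<in>P. k_robust E k B)" and g5: "(\<exists>B\<in>P. r \<in> B \<and> r' \<in> B)"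
    using gP unfolding goodP_def by simp_all
  have "\<not> k_robust E k (\<Union>Q)" if QP: "Q \<subseteq> P" and cQ: "card Q \<ge> 2" for Q
  proof
    assume kr: "k_robust E k (\<Union>Q)"
    have finQ: "finite Q" using finite_subset[OF QP finP] .
    have "Q \<noteq> {}" using cQ by (metis card.empty not_numeral_le_zero)
    then obtain B1 where B1: "B1 \<in> Q" by blast
    have "B1 \<noteq> {}" using g1 B1 QP by blast
    then have neU: "\<Union>Q \<noteq> {}" using B1 by blast
    define P' where "P' = insert (\<Union>Q) (P - Q)"
    have "goodP V E k r r' P'"
    proof -
      have d: "B \<inter> C = {}" if "B \<in> P'" "C \<in> P'" "B \<noteq> C" for B C
      proof -
        show ?thesis
        proof (cases "B = \<Union>Q")
          case True
          then have C: "C \<in> P" "C \<notin> Q" using that unfolding P'_def by auto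
          have "\<forall>X\<in>Q. X \<inter> C = {}"
          proof
            fix X assume X: "X \<in> Q"
            then have "X \<noteq> C" using C by blast
            then show "X \<inter> C = {}" using g3 X QP C by blast
          qed
          then show ?thesis using True union_disj by blast
        next
          case False
          then have Bi: "B \<in> P - Q" using that unfolding P'_def by auto
          show ?thesis
          proof (cases "C = \<Union>Q")
            case True
            have B: "B \<in> P" "B \<notin> Q" using Bi by auto
            have "\<forall>X\<in>Q. X \<inter> B = {}"
            proof
              fix X assume X: "X \<in> Q"
              then have "X \<noteq> B" using B by blast
              then show "X \<inter> B = {}" using g3 X QP B by blast
            qed
            then show ?thesis using True union_disj by blast
          next
            case False
            then have "C \<in> P - Q" using that unfolding P'_def by auto
            then show ?thesis using Bi g3 that(3) by blast
          qed
        qed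
      qed
      obtain B0 where B0: "B0 \<in> P" "r \<in> B0" "r' \<in> B0" using g5 by blast
      have ex: "\<exists>B\<in>P'. r \<in> B \<and> r' \<in> B"
      proof (cases "B0 \<in> Q")
        case True then show ?thesis using B0 unfolding P'_def by blast
      next
        case False then show ?thesis using B0 unfolding P'_def by blast
      qed
      have e1: "\<forall>B\<in>P'. B \<noteq> {} \<and> B \<subseteq> V" using g1 QP neU unfolding P'_def by blast
      have e2: "\<Union>P' = V" using g2 QP unfolding P'_def by blast
      have e4: "\<forall>B\<in>P'. k_robust E k B" using g4 kr unfolding P'_def by blast
      show ?thesis unfolding goodP_def using e1 e2 d e4 ex by blast
    qed
    then have "card P \<le> card P'" using minP by blast
    moreover have "card P' \<le> card (P - Q) + 1" unfolding P'_def
      using finP by (simp add: card_insert_if)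
    moreover have "card (P - Q) = card P - card Q" using card_Diff_subset[OF finQ QP] .
    moreover have "card Q \<le> card P" using card_mono[OF finP QP] .
    ultimately show False using cQ by linarith
  qed
  then have m: "\<forall>Q. Q \<subseteq> P \<and> card Q \<ge> 2 \<longrightarrow> \<not> k_robust E k (\<Union>Q)" by blast
  have "maximal_k_robust_partitioning V E k P"
    unfolding maximal_k_robust_partitioning_def using g1 g2 g3 g4 m by (intro conjI)
  then show ?thesis using g5 by blast
qed

end
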